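(* Let $a$ be a positive integer and let $\alpha,\beta$ be $\tilde{\mathbb N}$-compositions. Then $$\varphi\big(M_{(a,\alpha*\beta)}\big)=(-1)^{\ell_\varepsilon(\alpha)+\ell_\varepsilon(\beta)}M_{(a,\bar\alpha*\bar\beta)}.$$
   Context: $\tilde{\mathbb N}=\mathbb N\cup\{\varepsilon\}$ with $0+\varepsilon=\varepsilon+\varepsilon=\varepsilon$ and $n+\varepsilon=n$ for integers $n\ge1$. $\mathbf{k}$ is a commutative ring containing $\mathbb Q$; $\mathbf{k}[[X]]_{\tilde{\mathbb N}}$, $X=\{x_1<x_2<\cdots\}$, is the algebra of possibly infinite linear combinations of formal monomials $\prod x_i^{f(x_i)}$ with $f$ finitely supported $\tilde{\mathbb N}$-valued, multiplied by adding exponents. An $\tilde{\mathbb N}$-composition is a finite (possibly empty) sequence of elements of $\{\varepsilon,1,2,\dots\}$; $M_{(\alpha_1,\dots,\alpha_k)}=\sum_{1\le i_1<\cdots<i_k}x_{i_1}^{\alpha_1}\cdots x_{i_k}^{\alpha_k}$, $M_\emptyset=1$, and $\mathrm{WCQSym}$ is their (free) $\mathbf k$-span; $\mathrm{QSym}$ is the span of $M_\alpha$ with all entries positive integers. The quasi-shuffle product $*$ on formal linear combinations of $\tilde{\mathbb N}$-compositions is bilinear with $\emptyset*\gamma=\gamma*\emptyset=\gamma$ and $(c,\gamma)*(d,\delta)=(c,\gamma*(d,\delta))+(d,(c,\gamma)*\delta)+(c+d,\gamma*\delta)$; $M$ is extended linearly, and $(a,\cdot)$ (prepending $a$) is extended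 linearly. $\ell_\varepsilon(\alpha)$ is the number of entries equal to $\varepsilon$, $\bar\alpha$ is $\alpha$ with its $\varepsilon$ entries deleted. $\mathcal C_\varepsilon$ is the set of $\tilde{\mathbb N}$-compositions with first entry $\varepsilon$, $\mathcal C_N$ the set of all others. $\varphi:\mathrm{WCQSym}\to\mathrm{QSym}$ is the $\mathbf k$-linear map with $\varphi(M_\gamma)=(-1)^{\ell_\varepsilon(\gamma)}M_{\bar\gamma}$ for $\gamma\in\mathcal C_N$ and $\varphi(M_\gamma)=0$ for $\gamma\in\mathcal C_\varepsilon$. *)

theory Defs
  imports Main
begin

text \<open>Elements of tilde N: Eps stands for epsilon, Num n for the integer n
  (compositions only use Num n with n \<ge> 1).\<close>
datatype tn = Eps | Num nat

fun tadd :: "tn \<Rightarrow> tn \<Rightarrow> tn" where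
  "tadd Eps Eps = Eps"
| "tadd Eps (Num n) = (if n = 0 then Eps else Num n)"
| "tadd (Num n) Eps = (if n = 0 then Eps else Num n)"
| "tadd (Num m) (Num n) = Num (m + n)"

type_synonym comp = "tn list"

definition is_comp :: "comp \<Rightarrow> bool" where
  "is_comp \<gamma> \<longleftrightarrow> (\<forall>x\<in>set \<gamma>. x = Eps \<or> (\<exists>n\<ge>1. x = Num n))"

text \<open>Formal linear combinations of compositions with coefficients in 'k,
  represented by their (finitely supported) coefficient functions.
  Via gamma \<mapsto> M_gamma, such a combination f also represents the element
  sum f(gamma) M_gamma of WCQSym (the M_gamma form a basis of WCQSym, and the
  M_gamma with positive entries a basis of QSym); M extended linearly is thus
  the identity on coefficient functions.\<close>
type_synonym 'k lc = "comp \<Rightarrow> 'k"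

definition single_lc :: "comp \<Rightarrow> 'k::zero_neq_one lc" where
  "single_lc \<gamma> = (\<lambda>\<delta>. if \<delta> = \<gamma> then 1 else 0)"

text \<open>Prepending an entry a, extended linearly: (a, f).\<close>
definition prep :: "tn \<Rightarrow> 'k::zero lc \<Rightarrow> 'k lc" where
  "prep a f = (\<lambda>\<delta>. case \<delta> of [] \<Rightarrow> 0 | x # r \<Rightarrow> (if x = a then f r else 0))"

fun qsh :: "comp \<Rightarrow> comp \<Rightarrow> 'k::comm_ring_1 lc" where
  "qsh [] \<gamma> = single_lc \<gamma>"
| "qsh \<gamma> [] = single_lc \<gamma>"
| "qsh (c # \<gamma>) (d # \<delta>) =
     (\<lambda>\<rho>. prep c (qsh \<gamma> (d # \<delta>)) \<rho> + prep d (qsh (c # \<gamma>) \<delta>) \<rho>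
           + prep (tadd c d) (qsh \<gamma> \<delta>) \<rho>)"

definition ell_eps :: "comp \<Rightarrow> nat" where
  "ell_eps \<gamma> = length (filter (\<lambda>x. x = Eps) \<gamma>)"

definition bar :: "comp \<Rightarrow> comp" where
  "bar \<gamma> = filter (\<lambda>x. x \<noteq> Eps) \<gamma>"

definition in_C_eps :: "comp \<Rightarrow> bool" where
  "in_C_eps \<gamma> \<longleftrightarrow> (\<gamma> \<noteq> [] \<and> hd \<gamma> = Eps)"

text \<open>phi : WCQSym \<rightarrow> QSym, on coefficient functions (f has finite support):
  phi(M_gamma) = (-1)^{ell_eps gamma} M_{bar gamma} for gamma in C_N, 0 for gamma in C_eps.\<close>
definition phi :: "'k::comm_ring_1 lc \<Rightarrow> 'k lc" where
  "phi f = (\<lambda>\<delta>. \<Sum>\<gamma>\<in>{\<gamma>. f \<gamma> \<noteq> 0 \<and> \<not> in_C_eps \<gamma> \<and> bar \<gamma> = \<delta>}.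
                 (-1) ^ ell_eps \<gamma> * f \<gamma>)"

end

theory Submission
  imports Defs
begin

definition fin :: "'k::zero lc \<Rightarrow> bool" where
  "fin f \<longleftrightarrow> finite {\<gamma>. f \<gamma> \<noteq> 0}"

definition sg :: "comp \<Rightarrow> 'k::comm_ring_1" where
  "sg \<gamma> = (-1) ^ ell_eps \<gamma>"

definition psi :: "'k::comm_ring_1 lc \<Rightarrow> 'k lc" where
  "psi f = (\<lambda>\<delta>. \<Sum>\<gamma>\<in>{\<gamma>. f \<gamma> \<noteq> 0 \<and> bar \<gamma> = \<delta>}. sg \<gamma> * f \<gamma>)"

lemma fin_single: "fin (single_lc \<gamma>)"
proof -
  have "{\<delta>. single_lc \<gamma> \<delta> \<noteq> (0::'a)} \<subseteq> {\<gamma>}" by (auto simp: single_lc_def)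
  then show ?thesis unfolding fin_def using finite_subset by blast
qed

lemma prep_nz: "prep a f x \<noteq> 0 \<Longrightarrow> \<exists>r. x = a # r \<and> f r \<noteq> 0"
  by (cases x) (auto simp: prep_def split: if_splits)

lemma prep_Cons[simp]: "prep a f (b # r) = (if b = a then f r else 0)" "prep a f [] = 0"
  by (auto simp: prep_def)

lemma fin_prep: "fin f \<Longrightarrow> fin (prep a f)"
proof -
  assume "fin f"
  have "{\<delta>. prep a f \<delta> \<noteq> 0} \<subseteq> Cons a ` {\<gamma>. f \<gamma> \<noteq> 0}"
    by (auto dest!: prep_nz)
  then show ?thesis using \<open>fin f\<close> unfolding fin_def using finite_subset by blast
qed

lemma fin_add: "fin (f::'k::comm_monoid_add lc) \<Longrightarrow> fin g \<Longrightarrow> fin (\<lambda>x. f x + g x)"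
proof -
  assume "fin f" "fin g"
  have "{x. f x + g x \<noteq> 0} \<subseteq> {x. f x \<noteq> 0} \<union> {x. g x \<noteq> 0}" by auto
  then show ?thesis using \<open>fin f\<close> \<open>fin g\<close> unfolding fin_def using finite_subset by blast
qed

lemma fin_qsh: "fin (qsh \<alpha> \<beta>)"
  by (induction \<alpha> \<beta> rule: qsh.induct) (auto simp: fin_single intro!: fin_add fin_prep)

lemma psi_eq:
  assumes "finite S" "{\<gamma>. h \<gamma> \<noteq> 0} \<subseteq> S"
  shows "psi h \<delta> = (\<Sum>\<gamma>\<in>{\<gamma>\<in>S. bar \<gamma> = \<delta>}. sg \<gamma> * h \<gamma>)"
  unfolding psi_def
  by (rule sum.mono_neutral_left) (use assms in auto)

lemma psi_add:
  assumes "fin f" "fin g"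
  shows "psi (\<lambda>x. f x + g x) = (\<lambda>\<delta>. psi f \<delta> + psi g \<delta>)"
proof
  fix \<delta>
  let ?S = "{x. f x \<noteq> 0} \<union> {x. g x \<noteq> 0}"
  have S: "finite ?S" using assms unfolding fin_def by auto
  show "psi (\<lambda>x. f x + g x) \<delta> = psi f \<delta> + psi g \<delta>"
    apply (subst psi_eq[OF S], force)
    apply (subst psi_eq[OF S, of f], force)
    apply (subst psi_eq[OF S, of g], force)
    by (simp add: sum.distrib distrib_left)
qed

lemma bar_simps[simp]: "bar [] = []" "bar (Eps # r) = bar r" "bar (Num n # r) = Num n # bar r"
  by (auto simp: bar_def)

lemma ell_simps[simp]: "ell_eps [] = 0" "ell_eps (Eps # r) = Suc (ell_eps r)" "ell_eps (Num n # r) = ell_eps r"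
  by (auto simp: ell_eps_def)

lemma sg_simps[simp]: "sg [] = 1" "sg (Eps # r) = - sg r" "sg (Num n # r) = sg r"
  by (auto simp: sg_def)

lemma psi_single: "psi (single_lc \<gamma>) = (\<lambda>\<delta>. sg \<gamma> * single_lc (bar \<gamma>) \<delta>)"
proof
  fix \<delta>
  have "{x. single_lc \<gamma> x \<noteq> (0::'a) \<and> bar x = \<delta>} = (if bar \<gamma> = \<delta> then {\<gamma>} else {})"
    by (auto simp: single_lc_def)
  then show "psi (single_lc \<gamma>) \<delta> = (sg \<gamma> :: 'a) * single_lc (bar \<gamma>) \<delta>"
    unfolding psi_def by (auto simp: single_lc_def)
qed

lemma psi_prep_Eps: "psi (prep Eps g) = (\<lambda>\<delta>. - psi g \<delta>)"
proof
  fix \<delta>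
  have "{x. prep Eps g x \<noteq> 0 \<and> bar x = \<delta>} = Cons Eps ` {r. g r \<noteq> 0 \<and> bar r = \<delta>}"
    by (auto dest!: prep_nz)
  then show "psi (prep Eps g) \<delta> = - psi g \<delta>"
    unfolding psi_def
    by (simp add: sum.reindex sum_negf[symmetric] prep_def)
qed

lemma psi_prep_Num: "psi (prep (Num n) g) = prep (Num n) (psi g)"
proof
  fix \<delta>
  show "psi (prep (Num n) g) \<delta> = prep (Num n) (psi g) \<delta>"
  proof (cases \<delta>)
    case Nil
    have S: "{x. prep (Num n) g x \<noteq> 0 \<and> bar x = \<delta>} = {}"
      using Nil by (auto dest!: prep_nz)
    show ?thesis unfolding psi_def S using Nil by simp
  next
    case (Cons x r)
    show ?thesis
    proof (cases "x = Num n")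
      case True
      have "{y. prep (Num n) g y \<noteq> 0 \<and> bar y = \<delta>} = Cons (Num n) ` {y. g y \<noteq> 0 \<and> bar y = r}"
        using Cons True by (auto dest!: prep_nz)
      then show ?thesis unfolding psi_def using Cons True
        by (simp add: sum.reindex prep_def)
    next
      case False
      have S: "{y. prep (Num n) g y \<noteq> 0 \<and> bar y = \<delta>} = {}"
        using Cons False by (auto dest!: prep_nz)
      show ?thesis unfolding psi_def S using Cons False by simp
    qed
  qed
qed

lemma is_comp_Cons: "is_comp (c # r) \<longleftrightarrow> (c = Eps \<or> (\<exists>n\<ge>1. c = Num n)) \<and> is_comp r"
  by (auto simp: is_comp_def)

lemma prep_lin: "prep a (\<lambda>\<delta>. (k::'k::comm_ring_1) * f \<delta>) = (\<lambda>\<delta>. k * prep a f \<delta>)"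
  by (rule ext, simp add: prep_def split: list.splits)

lemma prep_uminus: "prep a (\<lambda>\<delta>. - (f::'k::comm_ring_1 lc) \<delta>) = (\<lambda>\<delta>. - prep a f \<delta>)"
  by (rule ext, simp add: prep_def split: list.splits)

lemma qsh_Nil2: "qsh x [] = single_lc x"
  by (cases x) auto

lemma main:
  "is_comp \<alpha> \<Longrightarrow> is_comp \<beta> \<Longrightarrow>
   psi (qsh \<alpha> \<beta> :: 'k::comm_ring_1 lc) = (\<lambda>\<delta>. sg \<alpha> * sg \<beta> * qsh (bar \<alpha>) (bar \<beta>) \<delta>)"
proof (induction \<alpha> \<beta> rule: qsh.induct)
  case (1 \<gamma>)
  then show ?case by (simp add: psi_single)
next
  case (2 v va)
  then show ?case by (simp add: psi_single qsh_Nil2 del: bar_simps(2,3) sg_simps(2,3))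
next
  case (3 c \<gamma> d \<delta>)
  have c: "c = Eps \<or> (\<exists>n\<ge>1. c = Num n)" and cg: "is_comp \<gamma>"
    using "3.prems" by (auto simp: is_comp_Cons)
  have d: "d = Eps \<or> (\<exists>n\<ge>1. d = Num n)" and dd: "is_comp \<delta>"
    using "3.prems" by (auto simp: is_comp_Cons)
  note I1 = "3.IH"(1)[OF cg "3.prems"(2)]
  note I2 = "3.IH"(2)[OF "3.prems"(1) dd]
  note I3 = "3.IH"(3)[OF cg dd]
  have E: "psi (qsh (c#\<gamma>) (d#\<delta>) :: 'k lc) = (\<lambda>\<rho>. psi (prep c (qsh \<gamma> (d#\<delta>))) \<rho> + psi (prep d (qsh (c#\<gamma>) \<delta>)) \<rho>
       + psi (prep (tadd c d) (qsh \<gamma> \<delta>)) \<rho>)"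
    by (simp only: qsh.simps(3)) (simp add: psi_add fin_add fin_prep fin_qsh)
  from c d show ?case
  proof (elim disjE exE conjE)
    assume "c = Eps" "d = Eps"
    then show ?thesis using I1 I2 I3 E by (auto simp: psi_prep_Eps algebra_simps)
  next
    fix n assume "c = Eps" "n \<ge> 1" "d = Num n"
    then show ?thesis using I1 I2 I3 E by (auto simp: psi_prep_Eps psi_prep_Num prep_lin prep_uminus algebra_simps)
  next
    fix m assume "m \<ge> 1" "c = Num m" "d = Eps"
    then show ?thesis using I1 I2 I3 E by (auto simp: psi_prep_Eps psi_prep_Num prep_lin prep_uminus algebra_simps)
  next
    fix m n assume "m \<ge> 1" "c = Num m" "n \<ge> 1" "d = Num n"
    then show ?thesis using I1 I2 I3 E by (auto simp: psi_prep_Eps psi_prep_Num prep_lin prep_uminus algebra_simps)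
  qed
qed

lemma phi_prep_Num: "phi (prep (Num a) f) = psi (prep (Num a) f)"
proof
  fix \<delta>
  have "{\<gamma>. prep (Num a) f \<gamma> \<noteq> 0 \<and> \<not> in_C_eps \<gamma> \<and> bar \<gamma> = \<delta>} = {\<gamma>. prep (Num a) f \<gamma> \<noteq> 0 \<and> bar \<gamma> = \<delta>}"
    by (auto simp: in_C_eps_def dest!: prep_nz)
  then show "phi (prep (Num a) f) \<delta> = psi (prep (Num a) f) \<delta>"
    unfolding phi_def psi_def sg_def by simp
qed

theorem lemma3p5:
  fixes a :: nat and \<alpha> \<beta> :: comp
  assumes k_Q: "\<forall>n::nat. n > 0 \<longrightarrow> (\<exists>y::'k::comm_ring_1. of_nat n * y = 1)"
    and a_pos: "a \<ge> 1"
    and \<alpha>: "is_comp \<alpha>" and \<beta>: "is_comp \<beta>"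
  shows "phi (prep (Num a) (qsh \<alpha> \<beta> :: 'k lc))
         = (\<lambda>\<delta>. (-1) ^ (ell_eps \<alpha> + ell_eps \<beta>) * prep (Num a) (qsh (bar \<alpha>) (bar \<beta>)) \<delta>)"
  by (simp add: phi_prep_Num psi_prep_Num main[OF \<alpha> \<beta>] prep_lin sg_def power_add)

end
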